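(* Let $m>2$ be an even integer, $n\ge 1$ an integer, and let $M_{2mn}=\langle a,b : a^m=b^{2n}=1,\ bab^{-1}=a^{-1}\rangle$ be the metacyclic group of order $2mn$. Let $\Gamma_{M_{2mn}}$ be its non-commuting graph. Then the spectrum of the distance matrix $D(\Gamma_{M_{2mn}})$ (eigenvalues counted with multiplicity, multiplicities being added if two of the listed values coincide) consists of: (a) $-2$ with multiplicity $2n(m-1)-\frac{m}{2}-1$; (b) $2n-2$ with multiplicity $\frac{m}{2}-1$; (c) $\frac{-(2n-3mn+4)+n\sqrt{5m^2-20m+36}}{2}$ and $\frac{-(2n-3mn+4)-n\sqrt{5m^2-20m+36}}{2}$, each with multiplicity $1$.
   Context: For a finite non-abelian group $G$ with centre $Z(G)$, the non-commuting graph $\Gamma_G$ is the simple undirected graph with vertex set $G\setminus Z(G)$, in which two distinct vertices $u,v$ are adjacent if and only if $uv\ne vu$. For a connected graph $H$, $d_{uv}$ denotes the length of a shortest path between vertices $u$ and $v$, and the distance matrix $D(H)$ is the matrix whose $(u,v)$-entry is $d_{uv}$. *)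

theory Defs
  imports "Jordan_Normal_Form.Char_Poly" "HOL-Library.Product_Lexorder"
begin

definition centre :: "'g set \<Rightarrow> ('g \<Rightarrow> 'g \<Rightarrow> 'g) \<Rightarrow> 'g set" where
  "centre G mul = {z \<in> G. \<forall>g\<in>G. mul z g = mul g z}"

definition nc_vertices :: "'g set \<Rightarrow> ('g \<Rightarrow> 'g \<Rightarrow> 'g) \<Rightarrow> 'g set" where
  "nc_vertices G mul = G - centre G mul"

definition nc_adj :: "'g set \<Rightarrow> ('g \<Rightarrow> 'g \<Rightarrow> 'g) \<Rightarrow> 'g \<Rightarrow> 'g \<Rightarrow> bool" where
  "nc_adj G mul u v \<longleftrightarrow> u \<in> nc_vertices G mul \<and> v \<in> nc_vertices G mul \<and> mul u v \<noteq> mul v u"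

definition nc_walk :: "'g set \<Rightarrow> ('g \<Rightarrow> 'g \<Rightarrow> 'g) \<Rightarrow> 'g list \<Rightarrow> bool" where
  "nc_walk G mul p \<longleftrightarrow> p \<noteq> [] \<and> set p \<subseteq> nc_vertices G mul \<and>
     (\<forall>i. Suc i < length p \<longrightarrow> nc_adj G mul (p ! i) (p ! Suc i))"

definition nc_dist :: "'g set \<Rightarrow> ('g \<Rightarrow> 'g \<Rightarrow> 'g) \<Rightarrow> 'g \<Rightarrow> 'g \<Rightarrow> nat" where
  "nc_dist G mul u v = (LEAST k. \<exists>p. nc_walk G mul p \<and> length p = Suc k \<and> hd p = u \<and> last p = v)"

definition nc_dist_matrix :: "('g::linorder) set \<Rightarrow> ('g \<Rightarrow> 'g \<Rightarrow> 'g) \<Rightarrow> real mat" where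
  "nc_dist_matrix G mul =
     (let vs = sorted_list_of_set (nc_vertices G mul)
      in mat (length vs) (length vs) (\<lambda>(i, j). real (nc_dist G mul (vs ! i) (vs ! j))))"

text \<open>The metacyclic group M_{2mn} = <a, b | a^m = b^(2n) = 1, b a b^(-1) = a^(-1)>,
  realised concretely: the pair (i, j) with i < m, j < 2n stands for a^i b^j, so
  (a^i1 b^j1)(a^i2 b^j2) = a^(i1 + (-1)^j1 i2) b^(j1 + j2).\<close>

definition M_carrier :: "nat \<Rightarrow> nat \<Rightarrow> (nat \<times> nat) set" where
  "M_carrier m n = {0..<m} \<times> {0..<2*n}"

definition M_mult :: "nat \<Rightarrow> nat \<Rightarrow> nat \<times> nat \<Rightarrow> nat \<times> nat \<Rightarrow> nat \<times> nat" where
  "M_mult m n x y =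
     ((fst x + (if even (snd x) then fst y else m - fst y)) mod m, (snd x + snd y) mod (2*n))"

end

theory Submission
  imports Defs
begin

lemma modeq_int: "(a::nat) mod m = b mod m \<longleftrightarrow> (int m) dvd (int a - int b)"
  by (metis of_nat_eq_iff zmod_int mod_eq_dvd_iff)

lemma arith_oo:
  fixes m h i k :: nat assumes "m = 2*h" "i < m" "k < m"
  shows "(i + (m - k)) mod m = (k + (m - i)) mod m \<longleftrightarrow> i mod h = k mod h"
proof -
  have "(i + (m - k)) mod m = (k + (m - i)) mod m \<longleftrightarrow> int m dvd (int (i + (m - k)) - int (k + (m - i)))"
    by (rule modeq_int)
  also have "int (i + (m - k)) - int (k + (m - i)) = 2 * (int i - int k)" using assms by simp
  also have "int m dvd 2 * (int i - int k) \<longleftrightarrow> int h dvd (int i - int k)"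
    using assms dvd_times_left_cancel_iff[of "2::int" "int h" "int i - int k"] by simp
  also have "\<dots> \<longleftrightarrow> i mod h = k mod h" using modeq_int by simp
  finally show ?thesis .
qed

lemma arith_eo:
  fixes m h i k :: nat assumes "m = 2*h" "i < m" "k < m"
  shows "(i + k) mod m = (k + (m - i)) mod m \<longleftrightarrow> i = 0 \<or> i = h"
proof -
  have "(i + k) mod m = (k + (m - i)) mod m \<longleftrightarrow> int m dvd (int (i + k) - int (k + (m - i)))"
    by (rule modeq_int)
  also have "int (i + k) - int (k + (m - i)) = 2 * int i - 2 * int h" using assms by simp
  also have "\<dots> = 2 * (int i - int h)" by simp
  also have "int m dvd 2 * (int i - int h) \<longleftrightarrow> int h dvd (int i - int h)"
    using assms dvd_times_left_cancel_iff[of "2::int" "int h" "int i - int h"] by simp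
  also have "\<dots> \<longleftrightarrow> int h dvd int i"
    by (metis dvd_diff dvd_refl diff_add_cancel dvd_add)
  also have "\<dots> \<longleftrightarrow> h dvd i" by simp
  also have "\<dots> \<longleftrightarrow> i = 0 \<or> i = h"
  proof
    assume "h dvd i" then obtain t where t: "i = h * t" by auto
    with assms have "t < 2 \<or> h = 0" by (cases "h = 0") auto
    with t assms show "i = 0 \<or> i = h" by (auto simp: less_2_cases_iff)
  qed auto
  finally show ?thesis .
qed

definition part :: "nat \<Rightarrow> nat \<times> nat \<Rightarrow> nat" where
  "part h v = (if even (snd v) then 0 else Suc (fst v mod h))"

lemma comm_iff:
  fixes m h n i j k l :: nat
  assumes "m = 2*h" "i<m" "k<m"
  shows "M_mult m n (i,j) (k,l) = M_mult m n (k,l) (i,j) \<longleftrightarrow>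
    (if even j then (if even l then True else i=0 \<or> i=h)
     else (if even l then k=0 \<or> k = h else i mod h = k mod h))"
  using arith_oo[OF assms] arith_eo[OF assms] arith_eo[of m h k i] assms
  by (auto simp: M_mult_def add.commute)

lemma centre_eq:
  fixes m h n :: nat
  assumes "m = 2*h" "h \<ge> 2" "n \<ge> 1"
  shows "centre (M_carrier m n) (M_mult m n) = {(i,j). i<m \<and> j<2*n \<and> even j \<and> (i=0 \<or> i=h)}"
proof (rule Set.set_eqI, rule iffI)
  fix z assume z: "z \<in> centre (M_carrier m n) (M_mult m n)"
  obtain i j where zij: "z = (i,j)" by force
  have c: "i < m" "j < 2*n" using z zij by (auto simp: centre_def M_carrier_def)
  have g1: "(1,0) \<in> M_carrier m n" "(0,1) \<in> M_carrier m n" using assms by (auto simp: M_carrier_def)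
  have "M_mult m n (i,j) (1,0) = M_mult m n (1,0) (i,j)"
    using z zij g1 by (auto simp: centre_def)
  hence e1: "even j" using comm_iff[of m h i 1 n j 0] assms c by (auto split: if_splits)
  have "M_mult m n (i,j) (0,1) = M_mult m n (0,1) (i,j)"
    using z zij g1 by (auto simp: centre_def)
  hence "i = 0 \<or> i = h" using comm_iff[of m h i 0 n j 1] assms c e1 by (auto split: if_splits)
  thus "z \<in> {(i,j). i<m \<and> j<2*n \<and> even j \<and> (i=0 \<or> i=h)}" using zij c e1 by auto
next
  fix z assume z: "z \<in> {(i,j). i<m \<and> j<2*n \<and> even j \<and> (i=0 \<or> i=h)}"
  then obtain i j where zij: "z = (i,j)" and c: "i<m" "j<2*n" "even j" "i=0 \<or> i=h" by auto
  show "z \<in> centre (M_carrier m n) (M_mult m n)"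
    unfolding centre_def
  proof (intro CollectI conjI ballI)
    show "z \<in> M_carrier m n" using zij c by (auto simp: M_carrier_def)
    fix g assume "g \<in> M_carrier m n"
    then obtain k l where g: "g = (k,l)" "k<m" "l < 2*n" by (auto simp: M_carrier_def)
    show "M_mult m n z g = M_mult m n g z" using comm_iff[of m h i k n j l] g c zij assms by auto
  qed
qed

lemma verts_eq:
  fixes m h n :: nat
  assumes "m = 2*h" "h \<ge> 2" "n \<ge> 1"
  shows "nc_vertices (M_carrier m n) (M_mult m n) = {(i,j). i<m \<and> j<2*n \<and> (odd j \<or> (i\<noteq>0 \<and> i\<noteq>h))}"
  unfolding nc_vertices_def centre_eq[OF assms] by (auto simp: M_carrier_def)

lemma comm_part:
  fixes m h n :: nat
  assumes "m = 2*h" "h \<ge> 2" "n \<ge> 1"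
    and u: "u \<in> nc_vertices (M_carrier m n) (M_mult m n)" and v: "v \<in> nc_vertices (M_carrier m n) (M_mult m n)"
  shows "M_mult m n u v = M_mult m n v u \<longleftrightarrow> part h u = part h v"
proof -
  obtain i j k l where uv: "u = (i,j)" "v = (k,l)" by force
  show ?thesis using u v unfolding verts_eq[OF assms(1-3)] uv
    using comm_iff[of m h i k n j l] assms by (auto simp: part_def)
qed

lemma other_part:
  fixes m h n :: nat
  assumes "m = 2*h" "h \<ge> 2" "n \<ge> 1"
    and u: "u \<in> nc_vertices (M_carrier m n) (M_mult m n)"
  shows "\<exists>w \<in> nc_vertices (M_carrier m n) (M_mult m n). part h w \<noteq> part h u"
proof (cases "part h u = 0")
  case True
  show ?thesis by (rule bexI[of _ "(0,1)"], insert True assms, auto simp: verts_eq part_def)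
next
  case False
  show ?thesis by (rule bexI[of _ "(1,0)"], insert False assms, auto simp: verts_eq part_def)
qed

lemma walk1: "u \<in> nc_vertices G mul \<Longrightarrow> nc_walk G mul [u]"
  by (auto simp: nc_walk_def)

lemma walk2: "nc_adj G mul u v \<Longrightarrow> nc_walk G mul [u,v]"
  by (auto simp: nc_walk_def nc_adj_def less_Suc_eq)

lemma walk3: "nc_adj G mul u w \<Longrightarrow> nc_adj G mul w v \<Longrightarrow> nc_walk G mul [u,w,v]"
  by (auto simp: nc_walk_def nc_adj_def less_Suc_eq nth_Cons')

lemma walk_len1: "length p = Suc 0 \<Longrightarrow> hd p = last p"
  by (cases p) auto

lemma walk_len2: assumes "nc_walk G mul p" "length p = Suc (Suc 0)"
  shows "nc_adj G mul (hd p) (last p)"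
proof -
  obtain a b where "p = [a,b]" using assms(2)
    by (metis One_nat_def length_0_conv length_Suc_conv)
  thus ?thesis using assms(1) unfolding nc_walk_def by auto
qed

lemma dist_eq:
  fixes m h n :: nat
  assumes "m = 2*h" "h \<ge> 2" "n \<ge> 1"
    and u: "u \<in> nc_vertices (M_carrier m n) (M_mult m n)" and v: "v \<in> nc_vertices (M_carrier m n) (M_mult m n)"
  shows "nc_dist (M_carrier m n) (M_mult m n) u v = (if u = v then 0 else if part h u = part h v then 2 else 1)"
proof -
  let ?G = "M_carrier m n" and ?mul = "M_mult m n"
  define P where "P k = (\<exists>p. nc_walk ?G ?mul p \<and> length p = Suc k \<and> hd p = u \<and> last p = v)" for k
  have dd: "nc_dist ?G ?mul u v = (LEAST k. P k)" unfolding nc_dist_def P_def ..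
  have P0: "P 0 \<Longrightarrow> u = v" unfolding P_def using walk_len1 by fastforce
  have P1: "P 1 \<Longrightarrow> nc_adj ?G ?mul u v" unfolding P_def using walk_len2 by fastforce
  have adj: "nc_adj ?G ?mul x y \<longleftrightarrow> part h x \<noteq> part h y"
    if "x \<in> nc_vertices ?G ?mul" "y \<in> nc_vertices ?G ?mul" for x y
    using comm_part[OF assms(1-3) that] that unfolding nc_adj_def by auto
  show ?thesis
  proof (cases "u = v")
    case True
    have "P 0" unfolding P_def using walk1[OF u] True by (intro exI[of _ "[u]"]) auto
    hence "(LEAST k. P k) = 0" by (rule Least_eq_0)
    with True dd show ?thesis by simp
  next
    case neq: False
    show ?thesis
    proof (cases "part h u = part h v")
      case False
      hence a: "nc_adj ?G ?mul u v" using adj u v by auto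
      have "P 1" unfolding P_def using walk2[OF a] by (intro exI[of _ "[u,v]"]) auto
      have "(LEAST k. P k) = 1"
      proof (rule Least_equality)
        show "P 1" by fact
        fix y assume "P y" thus "1 \<le> y" using P0 neq by (cases y) auto
      qed
      with neq False dd show ?thesis by simp
    next
      case True
      obtain w where w: "w \<in> nc_vertices ?G ?mul" "part h w \<noteq> part h u"
        using other_part[OF assms(1-3) u] by auto
      have a1: "nc_adj ?G ?mul u w" using adj[OF u w(1)] w by auto
      have a2: "nc_adj ?G ?mul w v" using adj[OF w(1) v] w True by auto
      have na: "\<not> nc_adj ?G ?mul u v" using adj[OF u v] True by auto
      have "P 2" unfolding P_def using walk3[OF a1 a2] by (intro exI[of _ "[u,w,v]"]) auto
      have "(LEAST k. P k) = 2"
      proof (rule Least_equality)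
        show "P 2" by fact
        fix y assume "P y" thus "2 \<le> y" using P0 P1 neq na
          by (cases y; cases "y - 1") auto
      qed
      with neq True dd show ?thesis by simp
    qed
  qed
qed

lemma card_evens: "card {j::nat. j < 2*n \<and> even j} = n"
proof -
  have "{j::nat. j < 2*n \<and> even j} = (\<lambda>t. 2*t) ` {0..<n}" by (auto elim!: evenE)
  moreover have "inj_on (\<lambda>t::nat. 2*t) {0..<n}" by (auto simp: inj_on_def)
  ultimately show ?thesis by (simp add: card_image)
qed

lemma card_odds: "card {j::nat. j < 2*n \<and> odd j} = n"
proof -
  have "{j::nat. j < 2*n \<and> odd j} = (\<lambda>t. 2*t+1) ` {0..<n}" by (auto elim!: oddE)
  moreover have "inj_on (\<lambda>t::nat. 2*t+1) {0..<n}" by (auto simp: inj_on_def)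
  ultimately show ?thesis by (simp add: card_image)
qed

lemma card_part0:
  fixes m h n :: nat
  assumes "m = 2*h" "h \<ge> 2" "n \<ge> 1"
  shows "card {v \<in> nc_vertices (M_carrier m n) (M_mult m n). part h v = 0} = n * (m - 2)"
proof -
  have "{v \<in> nc_vertices (M_carrier m n) (M_mult m n). part h v = 0} = ({0..<m} - {0,h}) \<times> {j. j<2*n \<and> even j}"
    unfolding verts_eq[OF assms] by (auto simp: part_def)
  moreover have "card ({0..<m} - {0,h}) = m - 2" using assms by (subst card_Diff_subset) auto
  ultimately show ?thesis by (simp add: card_cartesian_product card_evens)
qed

lemma card_partS:
  fixes m h n k :: nat
  assumes "m = 2*h" "h \<ge> 2" "n \<ge> 1" "k < h"
  shows "card {v \<in> nc_vertices (M_carrier m n) (M_mult m n). part h v = Suc k} = 2 * n"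
proof -
  have s: "{i. i < m \<and> i mod h = k} = {k, k+h}"
  proof (rule Set.set_eqI, rule iffI)
    fix i assume "i \<in> {i. i < m \<and> i mod h = k}"
    hence i: "i < 2*h" "i mod h = k" using assms by auto
    have "i div h < 2" using i(1) by (simp add: div_less_iff_less_mult mult.commute)
    hence "i div h = 0 \<or> i div h = 1" by auto
    thus "i \<in> {k, k+h}" using i(2) div_mult_mod_eq[of i h] by auto
  qed (use assms in auto)
  have "{v \<in> nc_vertices (M_carrier m n) (M_mult m n). part h v = Suc k} = {i. i < m \<and> i mod h = k} \<times> {j. j<2*n \<and> odd j}"
    unfolding verts_eq[OF assms(1-3)] by (auto simp: part_def)
  thus ?thesis unfolding s using assms by (simp add: card_cartesian_product card_odds)
qed

lemma card_verts:
  fixes m h n :: nat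
  assumes "m = 2*h" "h \<ge> 2" "n \<ge> 1"
  shows "card (nc_vertices (M_carrier m n) (M_mult m n)) = 2*n*(m-1)"
proof -
  have c: "centre (M_carrier m n) (M_mult m n) = {0,h} \<times> {j. j<2*n \<and> even j}"
    unfolding centre_eq[OF assms] using assms by auto
  have sub: "centre (M_carrier m n) (M_mult m n) \<subseteq> M_carrier m n" by (auto simp: centre_def)
  have "card (nc_vertices (M_carrier m n) (M_mult m n)) = card (M_carrier m n) - card (centre (M_carrier m n) (M_mult m n))"
    unfolding nc_vertices_def
    by (rule card_Diff_subset[OF finite_subset[OF sub] sub]) (auto simp: M_carrier_def)
  also have "\<dots> = m * (2*n) - 2 * n" unfolding c using assms
    by (simp add: card_cartesian_product card_evens M_carrier_def)
  finally show ?thesis by (simp add: algebra_simps diff_mult_distrib2)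
qed

lemma part_bound: "h > 0 \<Longrightarrow> part h v < Suc h"
  by (auto simp: part_def)

lemma finite_verts: "finite (nc_vertices (M_carrier m n) (M_mult m n))"
  unfolding nc_vertices_def M_carrier_def by auto

lemma sylvester_det:
  fixes U V :: "'a :: field mat" and c :: 'a
  assumes U: "U \<in> carrier_mat N r" and V: "V \<in> carrier_mat r N" and c: "c \<noteq> 0"
  shows "det (c \<cdot>\<^sub>m 1\<^sub>m N - U * V) * c ^ r = c ^ N * det (c \<cdot>\<^sub>m 1\<^sub>m r - V * U)"
proof -
  define M where "M = four_block_mat (c \<cdot>\<^sub>m 1\<^sub>m N) U V (1\<^sub>m r)"
  define L where "L = four_block_mat (1\<^sub>m N) (0\<^sub>m N r) (- ((1/c) \<cdot>\<^sub>m V)) (1\<^sub>m r)"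
  define R where "R = four_block_mat (1\<^sub>m N) (0\<^sub>m N r) (- V) (1\<^sub>m r)"
  have Mc: "M \<in> carrier_mat (N+r) (N+r)" unfolding M_def using U V by auto
  have Lc: "L \<in> carrier_mat (N+r) (N+r)" unfolding L_def using U V by auto
  have Rc: "R \<in> carrier_mat (N+r) (N+r)" unfolding R_def using U V by auto
  have dL: "det L = 1" unfolding L_def
    by (subst det_four_block_mat_upper_right_zero[of _ N _ r], insert V, auto)
  have dR: "det R = 1" unfolding R_def
    by (subst det_four_block_mat_upper_right_zero[of _ N _ r], insert V, auto)
  have LM: "L * M = four_block_mat (c \<cdot>\<^sub>m 1\<^sub>m N) U (0\<^sub>m r N) (1\<^sub>m r - (1/c) \<cdot>\<^sub>m (V * U))"
    unfolding L_def M_def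
    apply (subst mult_four_block_mat[of _ N N _ r _ r _ _ N _ r])
    using U V c apply (auto)
    done
  have MR: "M * R = four_block_mat (c \<cdot>\<^sub>m 1\<^sub>m N - U * V) U (0\<^sub>m r N) (1\<^sub>m r)"
    unfolding R_def M_def
    apply (subst mult_four_block_mat[of _ N N _ r _ r _ _ N _ r])
    using U V c apply (auto)
    done
  have "det (L * M) = det M" using det_mult[OF Lc Mc] dL by simp
  also have "det (L * M) = c ^ N * det (1\<^sub>m r - (1/c) \<cdot>\<^sub>m (V * U))"
    unfolding LM
    by (subst det_four_block_mat_lower_left_zero[of _ N _ r], insert U V, auto)
  also have "det M = det (M * R)" using det_mult[OF Mc Rc] dR by simp
  also have "\<dots> = det (c \<cdot>\<^sub>m 1\<^sub>m N - U * V)" unfolding MR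
    by (subst det_four_block_mat_lower_left_zero[of _ N _ r], insert U V, auto)
  finally have e: "det (c \<cdot>\<^sub>m 1\<^sub>m N - U * V) = c ^ N * det (1\<^sub>m r - (1/c) \<cdot>\<^sub>m (V * U))" by simp
  have "1\<^sub>m r - (1/c) \<cdot>\<^sub>m (V * U) = (1/c) \<cdot>\<^sub>m (c \<cdot>\<^sub>m 1\<^sub>m r - V * U)"
    by (rule eq_matI, insert U V c, auto simp: field_simps)
  hence "det (1\<^sub>m r - (1/c) \<cdot>\<^sub>m (V * U)) = (1/c)^r * det (c \<cdot>\<^sub>m 1\<^sub>m r - V * U)"
    using U V by simp
  with e c show ?thesis by (simp add: field_simps)
qed

lemma sum_single_nat:
  fixes f :: "nat \<Rightarrow> real"
  assumes "a < r"
  shows "(\<Sum>k\<in>{0..<r}. (if a = k then 1 else 0) * (f k :: real)) = f a"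
proof -
  have "(\<Sum>k\<in>{0..<r}. (if a = k then 1 else 0) * (f k :: real)) = (\<Sum>k\<in>{0..<r}. if a = k then f k else 0)"
    by (rule sum.cong) auto
  also have "\<dots> = f a" using assms by (subst sum.delta') auto
  finally show ?thesis .
qed

lemma sum_single_gen:
  fixes f g :: "nat \<Rightarrow> real"
  assumes "a < r"
  shows "(\<Sum>k\<in>{0..<r}. (if a = k then g k else 0) * f k) = g a * f a"
proof -
  have "(\<Sum>k\<in>{0..<r}. (if a = k then g k else 0) * f k) = (\<Sum>k\<in>{0..<r}. if a = k then g k * f k else 0)"
    by (rule sum.cong) auto
  also have "\<dots> = g a * f a" using assms by (subst sum.delta') auto
  finally show ?thesis .
qed

lemma char_poly_partition:
  fixes pt :: "nat \<Rightarrow> nat" and D :: "real mat" and c :: real and s :: "nat \<Rightarrow> real"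
  assumes D: "D = mat N N (\<lambda>(i,j). if i = j then 0 else if pt i = pt j then 2 else 1)"
  and pt: "\<forall>i<N. pt i < r"
  and c: "c \<noteq> 0" "\<forall>k<r. c \<noteq> s k"
  and s: "\<forall>k<r. s k = real (card {i. i<N \<and> pt i = k})"
  shows "poly (char_poly D) (c - 2) * c^r = c^N * (\<Prod>k\<in>{0..<r}. (c - s k)) * (1 - (\<Sum>k\<in>{0..<r}. s k/(c - s k)))"
proof -
  define U :: "real mat" where "U = mat N r (\<lambda>(i,k). if pt i = k then 1 else 0)"
  define W :: "real mat" where "W = mat r N (\<lambda>(k,j). if pt j = k then 2 else 1)"
  have Dc: "D \<in> carrier_mat N N" unfolding D by simp
  have Uc: "U \<in> carrier_mat N r" and Wc: "W \<in> carrier_mat r N" unfolding U_def W_def by auto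
  have UW: "row U i \<bullet> col W j = (if pt j = pt i then 2 else 1)" if "i < N" "j < N" for i j
  proof -
    have "row U i \<bullet> col W j = (\<Sum>k\<in>{0..<r}. (if pt i = k then 1 else 0) * (if pt j = k then 2 else 1))"
      using that Uc Wc by (simp add: U_def W_def scalar_prod_def)
    also have "\<dots> = (if pt j = pt i then 2 else 1)"
      by (rule sum_single_nat, use pt that in auto)
    finally show ?thesis .
  qed
  have "poly (char_poly D) (c - 2) = det (- (char_matrix D (c - 2)))" by (rule char_poly_matrix[OF Dc])
  also have "- (char_matrix D (c - 2)) = c \<cdot>\<^sub>m 1\<^sub>m N - U * W"
    by (rule eq_matI, insert Uc Wc, auto simp: char_matrix_def UW D)
  finally have e1: "poly (char_poly D) (c - 2) * c^r = c^N * det (c \<cdot>\<^sub>m 1\<^sub>m r - W * U)"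
    using sylvester_det[OF Uc Wc c(1)] by simp
  define E :: "real mat" where "E = mat r r (\<lambda>(k,l). if k = l then c - s k else 0)"
  define Y :: "real mat" where "Y = mat r 1 (\<lambda>(k,_). 1/(c - s k))"
  define Z :: "real mat" where "Z = mat 1 r (\<lambda>(_,l). s l)"
  have Ec: "E \<in> carrier_mat r r" and Yc: "Y \<in> carrier_mat r 1" and Zc: "Z \<in> carrier_mat 1 r"
    unfolding E_def Y_def Z_def by auto
  have WU: "row W k \<bullet> col U l = (if k = l then 2 else 1) * s l" if "k < r" "l < r" for k l
  proof -
    have "row W k \<bullet> col U l = (\<Sum>i\<in>{0..<N}. (if pt i = k then 2 else 1) * (if pt i = l then 1 else 0))"
      using that Uc Wc by (simp add: U_def W_def scalar_prod_def)
    also have "\<dots> = (\<Sum>i\<in>{0..<N}. if pt i = l then (if k = l then 2 else 1) else 0)"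
      by (rule sum.cong, auto)
    also have "\<dots> = (\<Sum>i\<in>{i\<in>{0..<N}. pt i = l}. (if k = l then 2 else 1))"
      by (rule sum.inter_filter[symmetric], auto)
    also have "\<dots> = (if k = l then 2 else 1) * s l"
      using s that by (simp add: mult.commute)
    finally show ?thesis .
  qed
  have EX: "(E * (1\<^sub>m r - Y * Z)) $$ (k,l) = (c - s k) * ((if k = l then 1 else 0) - s l / (c - s k))"
    if "k < r" "l < r" for k l
  proof -
    have "(E * (1\<^sub>m r - Y * Z)) $$ (k,l) = (\<Sum>j\<in>{0..<r}. (if k = j then c - s k else 0) * (1\<^sub>m r - Y * Z) $$ (j,l))"
      using that Ec Yc Zc by (simp add: E_def scalar_prod_def)
    also have "\<dots> = (c - s k) * (1\<^sub>m r - Y * Z) $$ (k,l)"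
      by (rule sum_single_gen[of k r "\<lambda>_. c - s k"], rule that(1))
    also have "(1\<^sub>m r - Y * Z) $$ (k,l) = (if k = l then 1 else 0) - s l / (c - s k)"
      using that Yc Zc by (simp add: Y_def Z_def scalar_prod_def)
    finally show ?thesis .
  qed
  have G: "c \<cdot>\<^sub>m 1\<^sub>m r - W * U = E * (1\<^sub>m r - Y * Z)"
  proof (rule eq_matI)
    fix k l assume kl: "k < dim_row (E * (1\<^sub>m r - Y * Z))" "l < dim_col (E * (1\<^sub>m r - Y * Z))"
    hence kl': "k < r" "l < r" using Ec Zc by auto
    have ne: "c - s k \<noteq> 0" using c kl' by auto
    show "(c \<cdot>\<^sub>m 1\<^sub>m r - W * U) $$ (k, l) = (E * (1\<^sub>m r - Y * Z)) $$ (k, l)"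
      unfolding EX[OF kl'] using kl' Wc Uc WU[OF kl'] ne by (auto simp: field_simps)
  qed (insert Ec Wc Uc Zc, auto)
  have dE: "det E = (\<Prod>k\<in>{0..<r}. (c - s k))"
  proof -
    have "upper_triangular E" unfolding upper_triangular_def E_def by auto
    hence "det E = prod_list (diag_mat E)" using det_upper_triangular Ec by blast
    also have "diag_mat E = map (\<lambda>k. c - s k) [0..<r]" unfolding diag_mat_def E_def by auto
    also have "prod_list \<dots> = (\<Prod>k\<in>{0..<r}. (c - s k))"
      using prod.distinct_set_conv_list[of "[0..<r]" "\<lambda>k. c - s k"] by simp
    finally show ?thesis .
  qed
  have dYZ: "det (1\<^sub>m r - Y * Z) = 1 - (\<Sum>k\<in>{0..<r}. s k/(c - s k))"
  proof -
    have "det (1 \<cdot>\<^sub>m 1\<^sub>m r - Y * Z) * 1^1 = 1^r * det (1 \<cdot>\<^sub>m 1\<^sub>m 1 - Z * Y)"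
      by (rule sylvester_det[OF Yc Zc], simp)
    moreover have one: "(1::real) \<cdot>\<^sub>m 1\<^sub>m k = 1\<^sub>m k" for k by (rule eq_matI) auto
    ultimately have "det (1\<^sub>m r - Y * Z) = det (1\<^sub>m 1 - Z * Y)" by simp
    also have "\<dots> = prod_list (diag_mat (1\<^sub>m 1 - Z * Y))"
      by (rule det_upper_triangular, insert Yc Zc, auto simp: upper_triangular_def)
    also have "\<dots> = 1 - (Z * Y) $$ (0,0)" using Yc Zc by (simp add: diag_mat_def)
    also have "(Z * Y) $$ (0,0) = (\<Sum>k\<in>{0..<r}. s k/(c - s k))"
      using Yc Zc by (simp add: Y_def Z_def scalar_prod_def)
    finally show ?thesis .
  qed
  show ?thesis using e1 unfolding G det_mult[OF Ec] 
    by (subst (asm) det_mult[OF Ec], insert Yc Zc, auto simp: dE dYZ)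
qed

lemma alg0:
  fixes A B a k h :: real
  assumes "A \<noteq> 0" "B \<noteq> 0"
  shows "A * B * (1 - a/A - h*(k/B)) = A*B - a*B - h*k*A"
  using assms by (simp add: field_simps)

lemma alg1:
  fixes x T n S :: real
  shows "(x - (T + n*S)/2)*(x - (T - n*S)/2) = x*x - T*x + (T*T - n*n*(S*S))/4"
  by (simp add: field_simps)

lemma alg:
  fixes n h c :: real
  assumes "c \<noteq> n*(2*h-2)" "c \<noteq> 2*n"
  shows "(c - n*(2*h-2)) * (c - 2*n) * (1 - n*(2*h-2)/(c - n*(2*h-2)) - h*(2*n/(c-2*n)))
   = (c - 2 - (-(2*n - 3*(2*h)*n + 4) + n * sqrt (5*(2*h)^2 - 20*(2*h) + 36)) / 2)
   * (c - 2 - (-(2*n - 3*(2*h)*n + 4) - n * sqrt (5*(2*h)^2 - 20*(2*h) + 36)) / 2)"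
proof -
  have d: "5*(2*h)^2 - 20*(2*h) + 36 \<ge> 0"
  proof -
    have "5*(2*h)^2 - 20*(2*h) + 36 = 5*(2*h-2)^2 + 16" by (simp add: power2_eq_square algebra_simps)
    thus ?thesis by (smt (verit) zero_le_power2)
  qed
  have sq: "sqrt (5*(2*h)^2 - 20*(2*h) + 36) ^ 2 = 5*(2*h)^2 - 20*(2*h) + 36" using d by simp
  have a1: "c - n*(2*h-2) \<noteq> 0" "c - 2*n \<noteq> 0" using assms by auto
  have "(c - n*(2*h-2)) * (c - 2*n) * (1 - n*(2*h-2)/(c - n*(2*h-2)) - h*(2*n/(c-2*n)))
    = (c - n*(2*h-2)) * (c - 2*n) - n*(2*h-2)*(c - 2*n) - h*2*n*(c - n*(2*h-2))"
    using alg0[OF a1, of "n*(2*h-2)" h "2*n"] by simp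
  also have "\<dots> = (c - 2 - (-(2*n - 3*(2*h)*n + 4) + n * sqrt (5*(2*h)^2 - 20*(2*h) + 36)) / 2)
   * (c - 2 - (-(2*n - 3*(2*h)*n + 4) - n * sqrt (5*(2*h)^2 - 20*(2*h) + 36)) / 2)"
  proof -
    define S where "S = sqrt (5*(2*h)^2 - 20*(2*h) + 36)"
    have SS: "S * S = 5*(2*h)^2 - 20*(2*h) + 36" using sq unfolding S_def power2_eq_square .
    show ?thesis unfolding S_def[symmetric] alg1 SS by (simp add: field_simps power2_eq_square)
  qed
  finally show ?thesis .
qed

lemma poly_eq_cofinite:
  fixes p q :: "real poly"
  assumes "finite S" "\<And>x. x \<notin> S \<Longrightarrow> poly p x = poly q x"
  shows "p = q"
proof (rule ccontr)
  assume "p \<noteq> q"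
  hence "p - q \<noteq> 0" by simp
  hence "finite {x. poly (p - q) x = 0}" by (rule poly_roots_finite)
  moreover have "UNIV - S \<subseteq> {x. poly (p - q) x = 0}" using assms(2) by auto
  ultimately have "finite (UNIV - S :: real set)" by (rule finite_subset[rotated])
  hence "finite (UNIV :: real set)" using assms(1) by (metis Diff_infinite_finite)
  thus False by (simp add: infinite_UNIV_char_0)
qed

theorem theorem6p2:
  fixes m n :: nat
  assumes "even m" and "m > 2" and "n \<ge> 1"
  shows "char_poly (nc_dist_matrix (M_carrier m n) (M_mult m n)) =
     [:2, 1:] ^ (2*n*(m-1) - m div 2 - 1)
     * [:- (2*real n - 2), 1:] ^ (m div 2 - 1)
     * [:- ((-(2*real n - 3*real m*real n + 4) + real n * sqrt (5*(real m)^2 - 20*real m + 36)) / 2), 1:]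
     * [:- ((-(2*real n - 3*real m*real n + 4) - real n * sqrt (5*(real m)^2 - 20*real m + 36)) / 2), 1:]"
proof -
  define h where "h = m div 2"
  have mh: "m = 2*h" using assms(1) h_def by auto
  have h2: "h \<ge> 2" using assms mh by auto
  note a3 = mh h2 assms(3)
  define V where "V = nc_vertices (M_carrier m n) (M_mult m n)"
  define vs where "vs = sorted_list_of_set V"
  define N where "N = length vs"
  have fin: "finite V" unfolding V_def by (rule finite_verts)
  have dist: "distinct vs" and setvs: "set vs = V" unfolding vs_def using fin by auto
  have NV: "N = 2*n*(m-1)" unfolding N_def vs_def V_def using card_verts[OF a3] by simp
  define pt where "pt i = part h (vs ! i)" for i
  have vsV: "vs ! i \<in> V" if "i < N" for i using that setvs N_def nth_mem by blast
  have D: "nc_dist_matrix (M_carrier m n) (M_mult m n) = mat N N (\<lambda>(i,j). if i = j then 0 else if pt i = pt j then 2 else 1)"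
    unfolding nc_dist_matrix_def Let_def V_def[symmetric] vs_def[symmetric] N_def[symmetric]
  proof (rule eq_matI)
    fix i j assume ij: "i < dim_row (mat N N (\<lambda>(i,j). if i = j then 0 else if pt i = pt j then 2 else (1::real)))"
      "j < dim_col (mat N N (\<lambda>(i,j). if i = j then 0 else if pt i = pt j then 2 else (1::real)))"
    hence ij': "i < N" "j < N" by auto
    have eq: "vs ! i = vs ! j \<longleftrightarrow> i = j" using dist ij' N_def nth_eq_iff_index_eq by blast
    show "mat N N (\<lambda>(i, j). real (nc_dist (M_carrier m n) (M_mult m n) (vs ! i) (vs ! j))) $$ (i, j) =
         mat N N (\<lambda>(i,j). if i = j then 0 else if pt i = pt j then 2 else (1::real)) $$ (i, j)"
      using ij' dist_eq[OF a3 vsV[OF ij'(1), unfolded V_def] vsV[OF ij'(2), unfolded V_def]] eq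
      by (simp add: pt_def)
  qed auto
  define a where "a = real n * (2*real h - 2)"
  define s :: "nat \<Rightarrow> real" where "s k = (if k = 0 then a else 2 * real n)" for k
  have ptb: "\<forall>i<N. pt i < Suc h" using part_bound h2 pt_def by auto
  have scard: "\<forall>k<Suc h. s k = real (card {i. i<N \<and> pt i = k})"
  proof (intro allI impI)
    fix k assume k: "k < Suc h"
    have "{v\<in>V. part h v = k} = (\<lambda>i. vs!i) ` {i. i<N \<and> pt i = k}"
      using setvs unfolding pt_def N_def by (auto simp: in_set_conv_nth image_iff) (metis)
    moreover have "inj_on (\<lambda>i. vs!i) {i. i<N \<and> pt i = k}"
      using dist unfolding N_def by (auto simp: inj_on_def nth_eq_iff_index_eq)
    ultimately have c: "card {i. i<N \<and> pt i = k} = card {v\<in>V. part h v = k}" by (simp add: card_image)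
    show "s k = real (card {i. i<N \<and> pt i = k})"
    proof (cases k)
      case 0
      have "real (n * (m - 2)) = a" unfolding a_def using mh h2 by (simp add: of_nat_diff)
      thus ?thesis using c card_part0[OF a3] 0 unfolding V_def s_def by simp
    next
      case (Suc k')
      thus ?thesis using c card_partS[OF a3, of k'] k unfolding V_def s_def by simp
    qed
  qed
  let ?R = "[:2, 1:] ^ (2*n*(m-1) - m div 2 - 1)
     * [:- (2*real n - 2), 1:] ^ (m div 2 - 1)
     * [:- ((-(2*real n - 3*real m*real n + 4) + real n * sqrt (5*(real m)^2 - 20*real m + 36)) / 2), 1:]
     * [:- ((-(2*real n - 3*real m*real n + 4) - real n * sqrt (5*(real m)^2 - 20*real m + 36)) / 2), 1:]"
  show ?thesis
  proof (rule poly_eq_cofinite[of "{-2, a - 2, 2 * real n - 2}"])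
    fix x assume x: "x \<notin> {-2, a - 2, 2 * real n - 2}"
    define c where "c = x + 2"
    have xc: "x = c - 2" unfolding c_def by simp
    have c0: "c \<noteq> 0" "\<forall>k<Suc h. c \<noteq> s k" using x unfolding c_def s_def by auto
    have main: "poly (char_poly (nc_dist_matrix (M_carrier m n) (M_mult m n))) (c - 2) * c^(Suc h)
      = c^N * (\<Prod>k\<in>{0..<Suc h}. (c - s k)) * (1 - (\<Sum>k\<in>{0..<Suc h}. s k/(c - s k)))"
      by (rule char_poly_partition[OF D ptb c0 scard])
    have pr: "(\<Prod>k\<in>{0..<Suc h}. (c - s k)) = (c - a) * (c - 2*real n)^h"
      unfolding prod.atLeast0_lessThan_Suc_shift by (simp add: s_def comp_def)
    have sm: "(\<Sum>k\<in>{0..<Suc h}. s k/(c - s k)) = a/(c - a) + h * (2*real n/(c - 2*real n))"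
      unfolding sum.atLeast0_lessThan_Suc_shift by (simp add: s_def comp_def)
    have Nh: "N = (N - Suc h) + Suc h" using NV mh h2 assms(3)
    proof -
      have "2*n*(m-1) \<ge> 2*(m-1)" using assms(3) by simp
      thus ?thesis using NV mh h2 by linarith
    qed
    have e1: "c^N = c^(N - Suc h) * c^(Suc h)" using Nh by (metis power_add)
    have e2: "(c - 2*real n)^h = (c - 2*real n)^(h-1) * (c - 2*real n)" using h2 by (cases h) auto
    have "poly (char_poly (nc_dist_matrix (M_carrier m n) (M_mult m n))) (c - 2) * c^(Suc h)
      = (c^(N - Suc h) * (c - 2*real n)^(h-1) * ((c - a) * (c - 2*real n) * (1 - a/(c - a) - h * (2*real n/(c - 2*real n))))) * c^(Suc h)"
      unfolding main pr sm e1 e2 diff_diff_eq by (simp only: mult_ac)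
    hence "poly (char_poly (nc_dist_matrix (M_carrier m n) (M_mult m n))) (c - 2)
      = c^(N - Suc h) * (c - 2*real n)^(h-1) * ((c - a) * (c - 2*real n) * (1 - a/(c - a) - h * (2*real n/(c - 2*real n))))"
      using c0 by simp
    also have "(c - a) * (c - 2*real n) * (1 - a/(c - a) - h * (2*real n/(c - 2*real n))) = 
      (c - 2 - (-(2*real n - 3*(2*real h)*real n + 4) + real n * sqrt (5*(2*real h)^2 - 20*(2*real h) + 36)) / 2)
     * (c - 2 - (-(2*real n - 3*(2*real h)*real n + 4) - real n * sqrt (5*(2*real h)^2 - 20*(2*real h) + 36)) / 2)"
      unfolding a_def
      by (rule alg) (use c0(2)[rule_format, of 0] c0(2)[rule_format, of 1] h2 in \<open>auto simp: s_def a_def\<close>)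
    also have "c^(N - Suc h) * (c - 2*real n)^(h-1) * \<dots> = poly ?R (c - 2)"
    proof -
      have p1: "poly [:2, 1:] (c-2) = c" by simp
      have p2: "poly [:- (2*real n - 2), 1:] (c-2) = c - 2*real n" by simp
      have p3: "poly [:-r, 1:] (c-2) = c - 2 - r" for r by simp
      have ex1: "2*n*(m-1) - m div 2 - 1 = N - Suc h" using NV mh by simp
      have ex2: "m div 2 - 1 = h - 1" using mh by simp
      have rm: "real m = 2 * real h" using mh by simp
      show ?thesis unfolding poly_mult poly_power p1 p2 ex1 ex2 rm unfolding p3 by (simp only: mult_ac)
    qed
    finally show "poly (char_poly (nc_dist_matrix (M_carrier m n) (M_mult m n))) x = poly ?R x"
      unfolding xc .
  qed simp
qed

end
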